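(* For every positive integer $n$ there exists a permutation of length $2n-1$ that contains every riffle shuffle permutation of length $n$ as a pattern, and there exists a permutation of length $2n-1$ that contains every antiriffle shuffle permutation of length $n$ as a pattern.
   Context: A permutation $\pi$ of length $k$ is a pattern of (is contained in) a permutation $\sigma$ if there are indices $\ell_1<\ell_2<\cdots<\ell_k$ such that for all $i,j$, $\pi_i<\pi_j$ if and only if $\sigma_{\ell_i}<\sigma_{\ell_j}$. The riffle shuffle permutations are the permutations avoiding (not containing as a pattern) each of $321$, $2143$ and $2413$; equivalently, permutations of $\{1,\dots,n\}$ obtained by interleaving the increasing sequences $1,2,\dots,k-1$ and $k,\dots,n$ for some $k$. An antiriffle shuffle permutation is a permutation whose inverse is a riffle shuffle permutation. *)

theory Defs
  imports Main
begin

text \<open>A permutation of length n is a list whose entries are exactly 1,...,n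
  (each once, since the length is n).\<close>
definition is_perm :: "nat \<Rightarrow> nat list \<Rightarrow> bool" where
  "is_perm n p \<longleftrightarrow> length p = n \<and> set p = {1..n}"

definition contains :: "nat list \<Rightarrow> nat list \<Rightarrow> bool" where
  "contains sigma pi \<longleftrightarrow>
     (\<exists>l :: nat \<Rightarrow> nat.
        (\<forall>i j. i < j \<and> j < length pi \<longrightarrow> l i < l j) \<and>
        (\<forall>i < length pi. l i < length sigma) \<and>
        (\<forall>i < length pi. \<forall>j < length pi. (pi ! i < pi ! j) \<longleftrightarrow> (sigma ! l i < sigma ! l j)))"

definition avoids :: "nat list \<Rightarrow> nat list \<Rightarrow> bool" where
  "avoids sigma pi \<longleftrightarrow> \<not> contains sigma pi"

definition riffle :: "nat list \<Rightarrow> bool" where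
  "riffle p \<longleftrightarrow> avoids p [3,2,1] \<and> avoids p [2,1,4,3] \<and> avoids p [2,4,1,3]"

definition perm_inverse :: "nat \<Rightarrow> nat list \<Rightarrow> nat list \<Rightarrow> bool" where
  "perm_inverse n p q \<longleftrightarrow> is_perm n p \<and> is_perm n q \<and> (\<forall>i < n. q ! (p ! i - 1) = i + 1)"

definition antiriffle :: "nat list \<Rightarrow> bool" where
  "antiriffle p \<longleftrightarrow> (\<exists>q. perm_inverse (length p) p q \<and> riffle q)"

end

theory Submission
  imports Defs
begin


lemma perm_distinct: "is_perm n p \<Longrightarrow> distinct p"
  unfolding is_perm_def by (intro card_distinct) simp

lemma perm_range: "is_perm n p \<Longrightarrow> i < n \<Longrightarrow> 1 \<le> p!i \<and> p!i \<le> n"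
  unfolding is_perm_def using nth_mem[of i p] by auto

lemma perm_inj: "is_perm n p \<Longrightarrow> i<n \<Longrightarrow> j<n \<Longrightarrow> p!i = p!j \<Longrightarrow> i = j"
  using nth_eq_iff_index_eq perm_distinct unfolding is_perm_def by metis

lemma contains_by_idx:
  assumes "sorted_wrt (<) idx" "\<forall>x\<in>set idx. x < length sigma" "length idx = length pi"
    "\<forall>i<length pi. \<forall>j<length pi. (pi!i < pi!j) = (sigma!(idx!i) < sigma!(idx!j))"
  shows "contains sigma pi"
  unfolding contains_def
  apply (rule exI[of _ "(!) idx"])
  using assms by (auto simp: sorted_wrt_iff_nth_less)

lemma c321: "i<j \<Longrightarrow> j<k \<Longrightarrow> k<length p \<Longrightarrow> p!j < p!i \<Longrightarrow> p!k < p!j \<Longrightarrow> contains p [3,2,1]"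
  by (rule contains_by_idx[where idx="[i,j,k]"]) (auto simp: less_Suc_eq numeral_eq_Suc nth_Cons')

lemma c2143: "a<b \<Longrightarrow> b<c \<Longrightarrow> c<d \<Longrightarrow> d<length p \<Longrightarrow> p!b < p!a \<Longrightarrow> p!a < p!d \<Longrightarrow> p!d < p!c \<Longrightarrow> contains p [2,1,4,3]"
  by (rule contains_by_idx[where idx="[a,b,c,d]"]) (auto simp: less_Suc_eq numeral_eq_Suc nth_Cons')

lemma c2413: "a<b \<Longrightarrow> b<c \<Longrightarrow> c<d \<Longrightarrow> d<length p \<Longrightarrow> p!c < p!a \<Longrightarrow> p!a < p!d \<Longrightarrow> p!d < p!b \<Longrightarrow> contains p [2,4,1,3]"
  by (rule contains_by_idx[where idx="[a,b,c,d]"]) (auto simp: less_Suc_eq numeral_eq_Suc nth_Cons')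

lemma inv_key:
  assumes P: "is_perm n p" and R: "riffle p"
    and ij: "i<j" "j<n" "p!j < p!i" and ij': "i'<j'" "j'<n" "p!j' < p!i'"
  shows "p!j < p!i'"
proof (rule ccontr)
  assume "\<not> p!j < p!i'"
  hence le: "p!i' \<le> p!j" by simp
  have len: "length p = n" using P unfolding is_perm_def by simp
  have n321: "\<not> contains p [3,2,1]" and n2143: "\<not> contains p [2,1,4,3]" and n2413: "\<not> contains p [2,4,1,3]"
    using R unfolding riffle_def avoids_def by auto
  show False
  proof (cases "p!i' = p!j")
    case True
    hence "i' = j" using perm_inj[OF P] ij ij' by simp
    thus False using c321[of i j j' p] ij ij' len n321 by auto
  next
    case False
    hence lt: "p!i' < p!j" using le by simp
    have "i \<noteq> i'" "i \<noteq> j'" "j \<noteq> j'" using lt ij ij' by auto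
    show False
    proof (cases "i < i'")
      case True thus False using c321[of i i' j' p] ij ij' len n321 lt by auto
    next
      case False
      hence ii: "i' < i" using \<open>i \<noteq> i'\<close> by simp
      show False
      proof (cases "j' < i")
        case True thus False using c2143[of i' j' i j p] ij ij' len n2143 lt ii by auto
      next
        case False
        hence "i < j'" using \<open>i \<noteq> j'\<close> by simp
        show False
        proof (cases "j < j'")
          case True thus False using c321[of i j j' p] ij ij' len n321 lt by auto
        next
          case False
          hence "j' < j" using \<open>j \<noteq> j'\<close> by simp
          thus False using c2413[of i' i j' j p] \<open>i < j'\<close> ij ij' len n2413 lt ii by auto
        qed
      qed
    qed
  qed
qed

lemma riffle_split:
  assumes P: "is_perm n p" and R: "riffle p"
  shows "\<exists>t. (\<forall>i j. i<j \<longrightarrow> j<n \<longrightarrow> p!i \<le> t \<longrightarrow> p!j \<le> t \<longrightarrow> p!i < p!j) \<and>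
             (\<forall>i j. i<j \<longrightarrow> j<n \<longrightarrow> t < p!i \<longrightarrow> t < p!j \<longrightarrow> p!i < p!j)"
proof -
  define S where "S = {p!j | j. \<exists>i<j. j<n \<and> p!j < p!i}"
  have fS: "finite S" unfolding S_def by (rule finite_subset[of _ "(!) p ` {..<n}"]) auto
  define t where "t = (if S = {} then 0 else Max S)"
  have neq: "p!i \<noteq> p!j" if "i<n" "j<n" "i \<noteq> j" for i j using perm_inj[OF P] that by blast
  have A: "p!i < p!j" if "i<j" "j<n" "p!i \<le> t" "p!j \<le> t" for i j
  proof (rule ccontr)
    assume "\<not> p!i < p!j"
    hence inv: "p!j < p!i" using neq[of i j] that by fastforce
    hence "p!j \<in> S" unfolding S_def using that by blast
    hence "S \<noteq> {}" by blast
    hence "t \<in> S" unfolding t_def using fS Max_in by simp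
    then obtain i'' j'' where "t = p!j''" "i''<j''" "j''<n" "p!j'' < p!i''" unfolding S_def by blast
    hence "t < p!i" using inv_key[OF P R, of i'' j'' i j] that inv by simp
    thus False using that by simp
  qed
  have B: "p!i < p!j" if "i<j" "j<n" "t < p!i" "t < p!j" for i j
  proof (rule ccontr)
    assume "\<not> p!i < p!j"
    hence inv: "p!j < p!i" using neq[of i j] that by fastforce
    hence "p!j \<in> S" unfolding S_def using that by blast
    hence "p!j \<le> t" unfolding t_def using fS by auto
    thus False using that by simp
  qed
  show ?thesis using A B by blast
qed

definition sR :: "nat \<Rightarrow> nat list" where
  "sR n = map (\<lambda>j. if even j then n + j div 2 else (j+1) div 2) [0..<2*n-1]"

lemma sR_perm: assumes "n \<ge> 1" shows "is_perm (2*n-1) (sR n)"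
proof -
  have "set (sR n) = {1..2*n-1}"
  proof
    show "set (sR n) \<subseteq> {1..2*n-1}" unfolding sR_def using assms by (auto elim!: oddE)
  next
    show "{1..2*n-1} \<subseteq> set (sR n)"
    proof
      fix v assume v: "v \<in> {1..2*n-1}"
      show "v \<in> set (sR n)"
      proof (cases "v < n")
        case True
        hence "(2*v-1) < 2*n-1" "odd (2*v-1)" "(2*v-1+1) div 2 = v" using v by auto
        thus ?thesis unfolding sR_def by (auto intro!: image_eqI[of _ _ "2*v-1"])
      next
        case False
        hence "2*(v-n) < 2*n-1" "even (2*(v-n))" "n + 2*(v-n) div 2 = v" using v by auto
        thus ?thesis unfolding sR_def by (auto intro!: image_eqI[of _ _ "2*(v-n)"])
      qed
    qed
  qed
  thus ?thesis unfolding is_perm_def sR_def by simp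
qed

lemma riffle_embed:
  assumes P: "is_perm n p" and n1: "n \<ge> 1"
    and A: "\<forall>i j. i<j \<longrightarrow> j<n \<longrightarrow> p!i \<le> t \<longrightarrow> p!j \<le> t \<longrightarrow> p!i < p!j"
    and B: "\<forall>i j. i<j \<longrightarrow> j<n \<longrightarrow> t < p!i \<longrightarrow> t < p!j \<longrightarrow> p!i < p!j"
    and H: "\<exists>k<n. t < p!k"
  shows "contains (sR n) p"
proof -
  have len: "length p = n" using P unfolding is_perm_def by simp
  define hi where "hi i = (t < p!i)" for i
  define pr where "pr i = (\<exists>k<i. t < p!k)" for i
  define l where "l i = (if hi i then 2*i else if pr i then 2*i-1 else 2*i+1)" for i
  define G where "G i = (if hi i then n+i else if pr i then i else i+1)" for i
  obtain k where k: "k<n" "hi k" using H hi_def by blast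
  have last: "i < n-1" if "i<n" "\<not> hi i" "\<not> pr i" for i
  proof -
    have "k \<noteq> i" using k that by auto
    moreover have "\<not> k < i" using k that pr_def hi_def by auto
    ultimately show ?thesis using k by simp
  qed
  have pr1: "i \<ge> 1" if "pr i" for i using that pr_def by auto
  have adj: "False" if "j = Suc i" "\<not> hi i" "\<not> pr i" "pr j" for i j
    using that unfolding pr_def hi_def by (auto simp: less_Suc_eq)
  have mono: "l i < l j" if "i<j" "j<n" for i j
  proof -
    show ?thesis
    proof (cases "j = Suc i")
      case True
      hence "\<not> hi i \<and> \<not> pr i \<longrightarrow> \<not> pr j" using adj by blast
      thus ?thesis using True pr1[of j] unfolding l_def by (auto split: if_splits)
    next
      case False
      hence "Suc i < j" using that by simp
      thus ?thesis using pr1[of j] unfolding l_def by (auto split: if_splits)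
    qed
  qed
  have bnd: "l i < 2*n-1" if "i<n" for i
    using that last[of i] pr1[of i] unfolding l_def by (auto split: if_splits)
  have val: "sR n ! (l i) = G i" if "i<n" for i
  proof -
    have "sR n ! (l i) = (if even (l i) then n + l i div 2 else (l i + 1) div 2)"
      unfolding sR_def using bnd[OF that] by simp
    thus ?thesis unfolding l_def G_def using pr1[of i] by (auto split: if_splits)
  qed
  have Glow: "G i < n" if "i<n" "\<not> hi i" for i
    using that last[of i] unfolding G_def by auto
  have Gmono: "G i < G j" if "i<n" "j<n" "p!i < p!j" for i j
  proof (cases "hi i")
    case hi: True
    hence hj: "hi j" using that hi_def by auto
    have "i < j"
    proof (rule ccontr)
      assume "\<not> i<j"
      hence "j < i \<or> j = i" by auto
      thus False using B that hi hj hi_def by fastforce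
    qed
    thus ?thesis using hi hj G_def by simp
  next
    case lo: False
    show ?thesis
    proof (cases "hi j")
      case True thus ?thesis using lo Glow[of i] that G_def by simp
    next
      case lj: False
      have "i < j"
      proof (rule ccontr)
        assume "\<not> i<j"
        hence "j < i \<or> j = i" by auto
        thus False using A that lo lj hi_def by fastforce
      qed
      show ?thesis
      proof (cases "j = Suc i")
        case True
        hence "\<not> pr i \<longrightarrow> \<not> pr j" using adj lo by blast
        thus ?thesis using True lo lj unfolding G_def by (auto split: if_splits)
      next
        case False
        hence "Suc i < j" using \<open>i<j\<close> by simp
        thus ?thesis using lo lj unfolding G_def by (auto split: if_splits)
      qed
    qed
  qed
  have cmp: "(p!i < p!j) = (sR n ! l i < sR n ! l j)" if "i<n" "j<n" for i j
  proof -
    have "p!i < p!j \<or> p!j < p!i \<or> i = j" using perm_inj[OF P that] by force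
    thus ?thesis using Gmono[of i j] Gmono[of j i] that val by auto
  qed
  show ?thesis unfolding contains_def
    apply (rule exI[of _ l])
    using mono bnd cmp len sR_def by auto
qed



definition sA :: "nat \<Rightarrow> nat list" where
  "sA n = map (\<lambda>j. if j < n-1 then 2*j+2 else 2*(j-(n-1))+1) [0..<2*n-1]"

lemma sA_perm: assumes "n \<ge> 1" shows "is_perm (2*n-1) (sA n)"
proof -
  have "set (sA n) = {1..2*n-1}"
  proof
    show "set (sA n) \<subseteq> {1..2*n-1}" unfolding sA_def using assms by auto
  next
    show "{1..2*n-1} \<subseteq> set (sA n)"
    proof
      fix v assume v: "v \<in> {1..2*n-1}"
      show "v \<in> set (sA n)"
      proof (cases "even v")
        case True
        then obtain m where m: "v = 2*m" by blast
        hence "m - 1 < n - 1" "2*(m-1)+2 = v" "m-1 < 2*n-1" using v by auto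
        thus ?thesis unfolding sA_def by (auto intro!: image_eqI[of _ _ "m-1"])
      next
        case False
        then obtain m where m: "v = 2*m+1" by (blast elim: oddE)
        hence "\<not> n-1+m < n-1" "2*(n-1+m-(n-1))+1 = v" "n-1+m < 2*n-1" using v by auto
        thus ?thesis unfolding sA_def by (auto intro!: image_eqI[of _ _ "n-1+m"])
      qed
    qed
  qed
  thus ?thesis unfolding is_perm_def sA_def by simp
qed

lemma anti_embed:
  assumes P: "is_perm n p" and n1: "n \<ge> 1" and tn: "t < n"
    and A: "\<forall>a b. a<b \<longrightarrow> b<t \<longrightarrow> p!a < p!b"
    and B: "\<forall>a b. a<b \<longrightarrow> b<n \<longrightarrow> t \<le> a \<longrightarrow> p!a < p!b"
  shows "contains (sA n) p"
proof -
  have len: "length p = n" using P unfolding is_perm_def by simp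
  define r2 where "r2 a = (t \<le> a)" for a
  define pr where "pr a = (\<exists>b<n. t \<le> b \<and> p!b < p!a)" for a
  define F where "F a = (if r2 a then 2*p!a - 1 else if pr a then 2*p!a-2 else 2*p!a)" for a
  define l where "l a = (if r2 a then n-1 + (p!a - 1) else if pr a then p!a - 2 else p!a - 1)" for a
  have rng: "1 \<le> p!a \<and> p!a \<le> n" if "a<n" for a using perm_range[OF P that] .
  have neq: "p!a \<noteq> p!b" if "a<n" "b<n" "a \<noteq> b" for a b using perm_inj[OF P] that by blast
  have pr2: "p!a \<ge> 2" if H: "pr a" for a
  proof -
    obtain b where "b<n" "p!b < p!a" using H unfolding pr_def by blast
    thus ?thesis using rng[of b] by simp
  qed
  have top: "p!a < n" if "a<n" "\<not> r2 a" "\<not> pr a" for a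
  proof -
    have b: "n-1 < n" "t \<le> n-1" using tn by auto
    have "a \<noteq> n-1" using that(2) b unfolding r2_def by auto
    hence ne: "p!(n-1) \<noteq> p!a" using neq b that by blast
    have "\<not> p!(n-1) < p!a" using that(3) b unfolding pr_def by blast
    thus ?thesis using ne rng[OF b(1)] by simp
  qed
  have adj: False if H: "a<n" "b<n" "\<not> r2 a" "\<not> pr a" "pr b" "p!b = Suc (p!a)" for a b
  proof -
    obtain c where c: "c<n" "t \<le> c" "p!c < p!b" using H(5) unfolding pr_def by blast
    have "c \<noteq> a" using c(2) H(3) unfolding r2_def by auto
    hence "p!c \<noteq> p!a" using neq c(1) H(1) by blast
    hence "p!c < p!a" using c(3) H(6) by simp
    thus False using c H(4) unfolding pr_def by blast
  qed
  have FC1: "F a = 2*p!a - 1 \<and> l a = n - 1 + (p!a - 1)" if "r2 a" for a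
    using that by (simp add: F_def l_def)
  have FC2: "F a = 2*p!a - 2 \<and> l a = p!a - 2" if "\<not> r2 a" "pr a" for a
    using that by (simp add: F_def l_def)
  have FC3: "F a = 2*p!a \<and> l a = p!a - 1" if "\<not> r2 a" "\<not> pr a" for a
    using that by (simp add: F_def l_def)
  have Fup: "F a \<le> 2*p!a \<and> (F a = 2*p!a \<longrightarrow> \<not> r2 a \<and> \<not> pr a)" if "a<n" for a
    using rng[OF that] FC1[of a] FC2[of a] FC3[of a] by (cases "r2 a"; cases "pr a") auto
  have Flo: "2*p!a \<le> F a + 2 \<and> (F a + 2 = 2*p!a \<longrightarrow> \<not> r2 a \<and> pr a)" if "a<n" for a
    using rng[OF that] pr2[of a] FC1[of a] FC2[of a] FC3[of a] by (cases "r2 a"; cases "pr a") auto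
  have Fmono: "F a < F b" if "a<n" "b<n" "p!a < p!b" for a b
  proof (rule ccontr)
    assume "\<not> F a < F b"
    hence "F a = 2*p!a" "F b + 2 = 2*p!b" "p!b = Suc (p!a)" using Fup[OF that(1)] Flo[OF that(2)] that(3) by linarith+
    thus False using adj[of a b] Fup[OF that(1)] Flo[OF that(2)] that by blast
  qed
  have lmono: "l a < l b" if "a<b" "b<n" for a b
  proof (cases "r2 a")
    case True
    hence rb: "r2 b" using that r2_def by auto
    moreover have "p!a < p!b" using B that True r2_def by blast
    ultimately show ?thesis using True FC1[of a] FC1[of b] rng[of a] that by auto
  next
    case na: False
    have lup: "l a \<le> p!a - 1 \<and> (l a = p!a - 1 \<longrightarrow> \<not> pr a)"
      using rng[of a] pr2[of a] FC2[of a] FC3[of a] na that by (cases "pr a") auto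
    show ?thesis
    proof (cases "r2 b")
      case True
      have "l a < n - 1"
      proof (cases "pr a")
        case True thus ?thesis using FC2[of a] na pr2[of a] rng[of a] that by simp
      next
        case False thus ?thesis using FC3[of a] top[of a] na that by simp
      qed
      thus ?thesis using FC1[of b] True by simp
    next
      case nb: False
      hence lt: "p!a < p!b" using A that r2_def by auto
      have llo: "p!b - 2 \<le> l b \<and> (l b = p!b - 2 \<longrightarrow> pr b)"
        using rng[of a] lt FC2[of b] FC3[of b] nb that by (cases "pr b") auto
      show ?thesis
      proof (rule ccontr)
        assume "\<not> l a < l b"
        hence "l a = p!a - 1" "l b = p!b - 2" "p!b = Suc (p!a)" using lup llo lt rng[of a] that by linarith+
        thus False using adj[of a b] lup llo na that by auto
      qed
    qed
  qed
  have bnd: "l a < 2*n-1" if "a<n" for a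
  proof (cases "r2 a")
    case True thus ?thesis using FC1[of a] rng[OF that] n1 by auto
  next
    case False thus ?thesis using FC2[of a] FC3[of a] rng[OF that] by (cases "pr a") auto
  qed
  have val: "sA n ! (l a) = F a" if "a<n" for a
  proof -
    have e: "sA n ! (l a) = (if l a < n-1 then 2 * l a + 2 else 2*(l a - (n-1)) + 1)"
      unfolding sA_def using bnd[OF that] by simp
    show ?thesis
    proof (cases "r2 a")
      case True thus ?thesis using e FC1[of a] rng[OF that] n1 by auto
    next
      case nr: False
      show ?thesis
      proof (cases "pr a")
        case True thus ?thesis using e nr FC2[of a] pr2[of a] rng[OF that] n1 by auto
      next
        case False thus ?thesis using e nr FC3[of a] top[OF that nr] rng[OF that] n1 by auto
      qed
    qed
  qed
  have cmp: "(p!a < p!b) = (sA n ! l a < sA n ! l b)" if "a<n" "b<n" for a b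
  proof -
    have "p!a < p!b \<or> p!b < p!a \<or> a = b" using perm_inj[OF P that] by force
    thus ?thesis using Fmono[of a b] Fmono[of b a] that val by auto
  qed
  show ?thesis unfolding contains_def
    apply (rule exI[of _ l])
    using lmono bnd cmp len sA_def by auto
qed


lemma anti_split:
  assumes P: "is_perm n p" and Q: "perm_inverse n p q" and R: "riffle q"
  shows "\<exists>t. (\<forall>a b. a<b \<longrightarrow> b<n \<longrightarrow> b<t \<longrightarrow> p!a < p!b) \<and>
             (\<forall>a b. a<b \<longrightarrow> b<n \<longrightarrow> t \<le> a \<longrightarrow> p!a < p!b)"
proof -
  have QP: "is_perm n q" and inv: "\<forall>i<n. q!(p!i - 1) = i+1" using Q unfolding perm_inverse_def by auto
  obtain t where A: "\<forall>i j. i<j \<longrightarrow> j<n \<longrightarrow> q!i \<le> t \<longrightarrow> q!j \<le> t \<longrightarrow> q!i < q!j"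
    and B: "\<forall>i j. i<j \<longrightarrow> j<n \<longrightarrow> t < q!i \<longrightarrow> t < q!j \<longrightarrow> q!i < q!j"
    using riffle_split[OF QP R] by blast
  have key: "p!a < p!b" if H: "a<b" "b<n" "(b<t) \<or> (t \<le> a)" for a b
  proof (rule ccontr)
    assume "\<not> p!a < p!b"
    moreover have "p!a \<noteq> p!b" using perm_inj[OF P, of a b] H by auto
    ultimately have lt: "p!b < p!a" by simp
    have ra: "1 \<le> p!a \<and> p!a \<le> n" and rb: "1 \<le> p!b \<and> p!b \<le> n" using perm_range[OF P] H by auto
    define u where "u = p!a - 1"
    define w where "w = p!b - 1"
    have uw: "w < u" "u < n" using lt ra rb u_def w_def by auto
    have qu: "q!u = a+1" and qw: "q!w = b+1" using inv H u_def w_def by auto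
    show False
    proof (cases "b<t")
      case True
      thus False using A uw qu qw H by fastforce
    next
      case False
      hence "t \<le> a" using H by auto
      thus False using B uw qu qw H by fastforce
    qed
  qed
  show ?thesis using key by blast
qed

theorem theorem1:
  fixes n :: nat
  assumes "n \<ge> 1"
  shows "(\<exists>s. is_perm (2*n - 1) s \<and> (\<forall>p. is_perm n p \<and> riffle p \<longrightarrow> contains s p)) \<and>
         (\<exists>s. is_perm (2*n - 1) s \<and> (\<forall>p. is_perm n p \<and> antiriffle p \<longrightarrow> contains s p))"
proof (intro conjI exI allI impI)
  show "is_perm (2*n-1) (sR n)" using sR_perm assms .
  show "is_perm (2*n-1) (sA n)" using sA_perm assms .
next
  fix p assume H: "is_perm n p \<and> riffle p"
  hence P: "is_perm n p" and R: "riffle p" by auto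
  obtain t where A: "\<forall>i j. i<j \<longrightarrow> j<n \<longrightarrow> p!i \<le> t \<longrightarrow> p!j \<le> t \<longrightarrow> p!i < p!j"
    and B: "\<forall>i j. i<j \<longrightarrow> j<n \<longrightarrow> t < p!i \<longrightarrow> t < p!j \<longrightarrow> p!i < p!j"
    using riffle_split[OF P R] by blast
  show "contains (sR n) p"
  proof (cases "\<exists>k<n. t < p!k")
    case True thus ?thesis using riffle_embed[OF P assms A B] by simp
  next
    case False
    hence all: "\<forall>k<n. p!k \<le> t" by auto
    have A0: "\<forall>i j. i<j \<longrightarrow> j<n \<longrightarrow> p!i \<le> 0 \<longrightarrow> p!j \<le> 0 \<longrightarrow> p!i < p!j"
      using perm_range[OF P] by fastforce
    have B0: "\<forall>i j. i<j \<longrightarrow> j<n \<longrightarrow> 0 < p!i \<longrightarrow> 0 < p!j \<longrightarrow> p!i < p!j"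
      using A all by auto
    have "0 < p!0" "0 < n" using perm_range[OF P, of 0] assms by auto
    hence H0: "\<exists>k<n. 0 < p!k" by blast
    show ?thesis using riffle_embed[OF P assms A0 B0 H0] .
  qed
next
  fix p assume H: "is_perm n p \<and> antiriffle p"
  hence P: "is_perm n p" and AR: "antiriffle p" by auto
  have len: "length p = n" using P unfolding is_perm_def by simp
  obtain q where Q: "perm_inverse n p q" and R: "riffle q" using AR len unfolding antiriffle_def by auto
  obtain t where A: "\<forall>a b. a<b \<longrightarrow> b<n \<longrightarrow> b<t \<longrightarrow> p!a < p!b"
    and B: "\<forall>a b. a<b \<longrightarrow> b<n \<longrightarrow> t \<le> a \<longrightarrow> p!a < p!b"
    using anti_split[OF P Q R] by blast
  show "contains (sA n) p"
  proof (cases "t < n")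
    case True
    have A1: "\<forall>a b. a<b \<longrightarrow> b<t \<longrightarrow> p!a < p!b" using A True by auto
    show ?thesis using anti_embed[OF P assms True A1 B] .
  next
    case False
    have A0: "\<forall>a b. a<b \<longrightarrow> b<(0::nat) \<longrightarrow> p!a < p!b" by auto
    have B0: "\<forall>a b. a<b \<longrightarrow> b<n \<longrightarrow> 0 \<le> a \<longrightarrow> p!a < p!b" using A False by auto
    have n0: "(0::nat) < n" using assms by simp
    show ?thesis using anti_embed[OF P assms n0 A0 B0] .
  qed
qed

end
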